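(* Let $\phi$ be an instance of \textsc{Max (2,3)-SAT} with $n$ variables and let $T_\phi$ be the tournament instance constructed from $\phi$ as described in the context. If $T_\phi$ has a seeding whose tournament value is at least $k'$, then $\phi$ admits an assignment that satisfies at least $k'-n$ clauses.
   Context: Tournament model: players form a finite set of size $2^{n'}$ totally ordered by strength (stronger beats weaker). A seeding is a bijection $\sigma$ from players to $[2^{n'}]$. In round $r=1,\dots,n'$, for each block of seed positions $\{(k-1)2^r+1,\dots,k2^r\}$, the winner $a$ of its first half $\{(k-1)2^r+1,\dots,(k-1)2^r+2^{r-1}\}$ plays the winner $b$ of its second half (a single-position block is won by the player seeded there), the stronger one wins the block, and the game has value $v(a,b,r)$. The tournament value is the sum of values of all games played. \textsc{Max (2,3)-SAT} instance: a CNF formula $\phi$ with variables $x_1,\dots,x_n$ and clauses $c_1,\dots,c_m$, each clause having exactly two literals and each variable appearing in at most three clauses; the occurrences of each variable $x$ as a literal are numbered $1,2,3$ (its $j$th appearance) in a fixed order. Construction of $T_\phi$: let $n'$ be the smallest integer with $16n\le 2^{n'}$ and $p=2^{n'}-16n$. Players: for each variable $x$, three variable players $x,x^T,x^F$; for each clause $c$, one clause player $c$; and dummy players $f_1,\dots,f_{13n+p-m}$. Strength order (strongest first): $x_1>x_1^T>x_1^F>x_2>x_2^T>x_2^F>\dots>x_n>x_n^T>x_n^F>c_1>\dots>c_m>f_1>\dots>f_{13n+p-m}$. Game values: for each variable $x$, $v(x,x^T,1)=v(x^T,x,1)=v(x,x^F,1)=v(x^F,x,1)=1$; for each clause $c$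 and each literal of $c$ that is the $j$th appearance of variable $x$, if $x$ appears non-negated there set $v(c,x^T,j)=v(x^T,c,j)=1$, and otherwise set $v(c,x^F,j)=v(x^F,c,j)=1$; all other values $v(a,b,r)$ for $r\in[n']$ are $0$. *)

theory Defs
  imports Main
begin

text \<open>A literal is a pair (variable index, polarity); polarity True means non-negated.  The occurrence numbering is given by
  occ i p = j, meaning the literal at position p (0 = first, 1 = second) of
  clause i is the j-th appearance of its variable.\<close>

type_synonym literal = "nat \<times> bool"
type_synonym clause = "literal \<times> literal"

definition lit :: "clause list \<Rightarrow> nat \<Rightarrow> nat \<Rightarrow> literal" where
  "lit cls i p = (if p = 0 then fst (cls ! i) else snd (cls ! i))"

definition occurrences :: "clause list \<Rightarrow> nat \<Rightarrow> (nat \<times> nat) set" where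
  "occurrences cls x = {(i, p). i < length cls \<and> p < 2 \<and> fst (lit cls i p) = x}"

definition max23_instance :: "nat \<Rightarrow> clause list \<Rightarrow> (nat \<Rightarrow> nat \<Rightarrow> nat) \<Rightarrow> bool" where
  "max23_instance n cls occ \<longleftrightarrow>
     (\<forall>i<length cls. \<forall>p<2. fst (lit cls i p) < n) \<and>
     (\<forall>x<n. card (occurrences cls x) \<le> 3) \<and>
     (\<forall>x<n. bij_betw (\<lambda>(i, p). occ i p) (occurrences cls x) {1..card (occurrences cls x)})"

definition lit_true :: "(nat \<Rightarrow> bool) \<Rightarrow> literal \<Rightarrow> bool" where
  "lit_true a l = (a (fst l) = snd l)"

definition num_satisfied :: "clause list \<Rightarrow> (nat \<Rightarrow> bool) \<Rightarrow> nat" where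
  "num_satisfied cls a = card {i. i < length cls \<and> (lit_true a (fst (cls ! i)) \<or> lit_true a (snd (cls ! i)))}"

datatype player = Var nat | VarT nat | VarF nat | Cl nat | Dummy nat

definition rounds :: "nat \<Rightarrow> nat" where
  "rounds n = (LEAST n'. 16 * n \<le> 2 ^ n')"

definition padding :: "nat \<Rightarrow> nat" where
  "padding n = 2 ^ rounds n - 16 * n"

definition players :: "nat \<Rightarrow> nat \<Rightarrow> player set" where
  "players n m =
     {Var x | x. x < n} \<union> {VarT x | x. x < n} \<union> {VarF x | x. x < n} \<union>
     {Cl c | c. c < m} \<union> {Dummy f | f. f < 13 * n + padding n - m}"

text \<open>Strength rank: smaller rank = stronger.  Order
  x_0 > x_0^T > x_0^F > x_1 > ... > x_{n-1}^F > c_0 > ... > c_{m-1} > f_0 > ...\<close>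
fun rank :: "nat \<Rightarrow> nat \<Rightarrow> player \<Rightarrow> nat" where
  "rank n m (Var x) = 3 * x"
| "rank n m (VarT x) = 3 * x + 1"
| "rank n m (VarF x) = 3 * x + 2"
| "rank n m (Cl c) = 3 * n + c"
| "rank n m (Dummy f) = 3 * n + m + f"

definition stronger_of :: "(player \<Rightarrow> nat) \<Rightarrow> player \<Rightarrow> player \<Rightarrow> player" where
  "stronger_of rk a b = (if rk a < rk b then a else b)"

definition value_edge :: "clause list \<Rightarrow> (nat \<Rightarrow> nat \<Rightarrow> nat) \<Rightarrow> player \<Rightarrow> player \<Rightarrow> nat \<Rightarrow> bool" where
  "value_edge cls occ a b r \<longleftrightarrow>
     (\<exists>x. r = 1 \<and> a = Var x \<and> (b = VarT x \<or> b = VarF x)) \<or>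
     (\<exists>c p. c < length cls \<and> p < 2 \<and> a = Cl c \<and> r = occ c p \<and>
        b = (if snd (lit cls c p) then VarT (fst (lit cls c p)) else VarF (fst (lit cls c p))))"

definition game_value :: "clause list \<Rightarrow> (nat \<Rightarrow> nat \<Rightarrow> nat) \<Rightarrow> player \<Rightarrow> player \<Rightarrow> nat \<Rightarrow> nat" where
  "game_value cls occ a b r =
     (if value_edge cls occ a b r \<or> value_edge cls occ b a r then 1 else 0)"

text \<open>Winner of block k (k >= 1) of seed positions {(k-1)2^r+1 .. k 2^r};
  seat q is the player seeded at position q.\<close>
fun winner :: "(player \<Rightarrow> nat) \<Rightarrow> (nat \<Rightarrow> player) \<Rightarrow> nat \<Rightarrow> nat \<Rightarrow> player" where
  "winner rk seat 0 k = seat k"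
| "winner rk seat (Suc r) k =
     stronger_of rk (winner rk seat r (2 * k - 1)) (winner rk seat r (2 * k))"

definition tournament_value :: "nat \<Rightarrow> clause list \<Rightarrow> (nat \<Rightarrow> nat \<Rightarrow> nat) \<Rightarrow> (player \<Rightarrow> nat) \<Rightarrow> nat" where
  "tournament_value n cls occ \<sigma> =
     (let n' = rounds n; m = length cls; rk = rank n m;
          seat = inv_into (players n m) \<sigma> in
      \<Sum>r\<in>{1..n'}. \<Sum>k\<in>{1..2 ^ (n' - r)}.
         game_value cls occ (winner rk seat (r - 1) (2 * k - 1)) (winner rk seat (r - 1) (2 * k)) r)"

end

theory Submission
  imports Defs
begin


definition blk :: "nat \<Rightarrow> nat \<Rightarrow> nat set" where
  "blk r k = {(k-1)*2^r+1 .. k*2^r}"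

lemma blk_disj:
  assumes "q \<in> blk r k" "q \<in> blk r k'" shows "k = k'"
proof (rule ccontr)
  assume "k \<noteq> k'"
  then consider "k < k'" | "k' < k" by linarith
  then show False
  proof cases
    case 1
    then have "k * 2^r \<le> (k'-1)*2^r" by (intro mult_le_mono1) linarith
    moreover have "q \<le> k*2^r" "(k'-1)*2^r + 1 \<le> q" using assms by (auto simp: blk_def)
    ultimately show False by linarith
  next
    case 2
    then have "k' * 2^r \<le> (k-1)*2^r" by (intro mult_le_mono1) linarith
    moreover have "q \<le> k'*2^r" "(k-1)*2^r + 1 \<le> q" using assms by (auto simp: blk_def)
    ultimately show False by linarith
  qed
qed

lemma blk_child1: "k \<ge> 1 \<Longrightarrow> blk r (2*k-1) \<subseteq> blk (Suc r) k"
proof -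
  assume k: "k \<ge> 1"
  have e1: "(2*k-1-1)*2^r = (k-1)*2^Suc r" using k by (simp add: algebra_simps)
  have e2: "(2*k-1)*2^r \<le> k*2^Suc r" by simp
  show ?thesis unfolding blk_def using e1 e2 by auto
qed

lemma blk_child2: "k \<ge> 1 \<Longrightarrow> blk r (2*k) \<subseteq> blk (Suc r) k"
proof -
  assume k: "k \<ge> 1"
  have e1: "(k-1)*2^Suc r \<le> (2*k-1)*2^r" by (simp add: algebra_simps)
  have e2: "(2*k)*2^r = k*2^Suc r" by simp
  show ?thesis unfolding blk_def using e1 e2 by auto
qed

lemma blk_sub: "r \<le> N \<Longrightarrow> k \<le> 2^(N-r) \<Longrightarrow> blk r k \<subseteq> {1..2^N}"
proof -
  assume "r \<le> N" "k \<le> 2^(N-r)"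
  then have "k*2^r \<le> 2^(N-r)*2^r" by simp
  also have "\<dots> = 2^N" using \<open>r \<le> N\<close> by (simp add: power_add[symmetric])
  finally show ?thesis unfolding blk_def by auto
qed

lemma child_range:
  fixes k :: nat
  assumes "Suc r \<le> N" "k \<in> {1..2^(N - Suc r)}"
  shows "2*k-1 \<in> {1..2^(N-r)}" "2*k \<in> {1..2^(N-r)}"
proof -
  have "(2::nat)^(N-r) = 2 * 2^(N - Suc r)" using assms(1)
    by (metis Suc_diff_le Suc_le_lessD diff_Suc_Suc power_Suc)
  then show "2*k-1 \<in> {1..2^(N-r)}" "2*k \<in> {1..2^(N-r)}" using assms(2) by auto
qed

lemma winner_in:
  "r \<le> N \<Longrightarrow> k \<in> {1..2^(N-r)} \<Longrightarrow> \<exists>q\<in>blk r k. winner rk seat r k = seat q"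
proof (induction r arbitrary: k)
  case 0
  then show ?case by (simp add: blk_def)
next
  case (Suc r)
  note cr = child_range[OF Suc.prems]
  obtain q1 where q1: "q1 \<in> blk r (2*k-1)" "winner rk seat r (2*k-1) = seat q1"
    using Suc.IH[OF _ cr(1)] Suc.prems by auto
  obtain q2 where q2: "q2 \<in> blk r (2*k)" "winner rk seat r (2*k) = seat q2"
    using Suc.IH[OF _ cr(2)] Suc.prems by auto
  have k1: "k \<ge> 1" using Suc.prems by auto
  have "q1 \<in> blk (Suc r) k" "q2 \<in> blk (Suc r) k"
    using subsetD[OF blk_child1[OF k1] q1(1)] subsetD[OF blk_child2[OF k1] q2(1)] by auto
  then show ?case using q1 q2 by (auto simp: stronger_of_def)
qed

lemma winner_step:
  "winner rk seat (Suc r) k \<in> {winner rk seat r (2*k-1), winner rk seat r (2*k)}"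
  by (simp add: stronger_of_def)

lemma winner_mono:
  "s \<le> r \<Longrightarrow> r \<le> N \<Longrightarrow> k \<in> {1..2^(N-r)} \<Longrightarrow>
    \<exists>k'\<in>{1..2^(N-s)}. winner rk seat s k' = winner rk seat r k"
proof (induction r arbitrary: k)
  case 0
  then show ?case by auto
next
  case (Suc r)
  show ?case
  proof (cases "s = Suc r")
    case True
    then show ?thesis using Suc.prems by auto
  next
    case False
    then have s: "s \<le> r" using Suc.prems by auto
    note cr = child_range[OF Suc.prems(2,3)]
    from winner_step[of rk seat r k] show ?thesis
    proof
      assume h: "winner rk seat (Suc r) k = winner rk seat r (2 * k - 1)"
      show ?thesis using Suc.IH[OF s _ cr(1)] Suc.prems h by auto
    next
      assume "winner rk seat (Suc r) k \<in> {winner rk seat r (2 * k)}"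
      then have h: "winner rk seat (Suc r) k = winner rk seat r (2 * k)" by simp
      show ?thesis using Suc.IH[OF s _ cr(2)] Suc.prems h by auto
    qed
  qed
qed

context
  fixes seat :: "nat \<Rightarrow> player" and N :: nat and rk :: "player \<Rightarrow> nat"
  assumes inj: "inj_on seat {1..2^N}"
begin

lemma winner_pos_unique:
  assumes "r \<le> N" "k \<in> {1..2^(N-r)}" "q \<in> blk r k'" "k' \<in> {1..2^(N-r)}"
    "winner rk seat r k = seat q"
  shows "k = k'"
proof -
  obtain q0 where q0: "q0 \<in> blk r k" "winner rk seat r k = seat q0"
    using winner_in assms by blast
  have "q0 \<in> {1..2^N}" "q \<in> {1..2^N}" using blk_sub[of r N k] blk_sub[of r N k'] assms q0 by auto
  then have "q0 = q" using inj q0 assms(5) by (metis inj_on_def)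
  then show ?thesis using blk_disj q0 assms(3) by blast
qed

lemma winner_unique:
  assumes "r \<le> N" "k \<in> {1..2^(N-r)}" "k' \<in> {1..2^(N-r)}"
    "winner rk seat r k = winner rk seat r k'"
  shows "k = k'"
proof -
  obtain q where "q \<in> blk r k'" "winner rk seat r k' = seat q"
    using winner_in assms by blast
  then show ?thesis using winner_pos_unique assms by metis
qed

lemma fact_a:
  assumes "1 \<le> r" "r \<le> N" "k \<in> {1..2^(N-r)}" "k' \<in> {1..2^(N-r)}"
    "P \<in> {winner rk seat (r-1) (2*k-1), winner rk seat (r-1) (2*k)}"
    "P \<in> {winner rk seat (r-1) (2*k'-1), winner rk seat (r-1) (2*k')}"
  shows "k = k'"
proof -
  obtain s where r: "r = Suc s" using assms(1) by (cases r) auto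
  have sN: "Suc s \<le> N" using assms r by auto
  have c1: "2*k-1 \<in> {1..2^(N-s)}" "2*k \<in> {1..2^(N-s)}"
    using child_range[OF sN, of k] assms(3) r by auto
  have c2: "2*k'-1 \<in> {1..2^(N-s)}" "2*k' \<in> {1..2^(N-s)}"
    using child_range[OF sN, of k'] assms(4) r by auto
  obtain j where j: "j = 2*k-1 \<or> j = 2*k" "P = winner rk seat s j" using assms(5) r by auto
  obtain j' where j': "j' = 2*k'-1 \<or> j' = 2*k'" "P = winner rk seat s j'" using assms(6) r by auto
  have jr: "j \<in> {1..2^(N-s)}" using j(1) c1 by blast
  have jr': "j' \<in> {1..2^(N-s)}" using j'(1) c2 by blast
  have "j = j'" using winner_unique[of s j j'] sN jr jr' j(2) j'(2) by simp
  then show ?thesis using j(1) j'(1) assms(3,4) by auto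
qed

lemma fact_b:
  assumes "1 \<le> r" "r < r'" "r' \<le> N" "k \<in> {1..2^(N-r)}" "k' \<in> {1..2^(N-r')}"
    "P \<in> {winner rk seat (r-1) (2*k-1), winner rk seat (r-1) (2*k)}"
    "P \<noteq> winner rk seat r k"
    "P \<in> {winner rk seat (r'-1) (2*k'-1), winner rk seat (r'-1) (2*k')}"
  shows False
proof -
  obtain s where r: "r = Suc s" using assms(1) by (cases r) auto
  obtain s' where r': "r' = Suc s'" using assms(2) by (cases r') auto
  have cr': "2*k'-1 \<in> {1..2^(N-s')}" "2*k' \<in> {1..2^(N-s')}"
    using child_range[of s' N k'] assms r' by auto
  obtain j' where j': "j' \<in> {1..2^(N-s')}" "P = winner rk seat s' j'"
  proof -
    from assms(8) r' have "P = winner rk seat s' (2*k'-1) \<or> P = winner rk seat s' (2*k')" by auto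
    then show ?thesis using that cr' by blast
  qed
  obtain k'' where k'': "k'' \<in> {1..2^(N-r)}" "winner rk seat r k'' = P"
    using winner_mono[of r s' N j' rk seat] j' assms r r' by auto
  have cr: "2*k-1 \<in> {1..2^(N-s)}" "2*k \<in> {1..2^(N-s)}"
    using child_range[of s N k] assms r by auto
  obtain j where j: "j \<in> {2*k-1, 2*k}" "P = winner rk seat s j"
    using assms(6) r by auto
  have jr: "j \<in> {1..2^(N-s)}" using j cr by auto
  obtain q where q: "q \<in> blk s j" "winner rk seat s j = seat q"
    using winner_in[of s N j rk seat] jr assms r by auto
  have "k \<ge> 1" using assms by auto
  have "q \<in> blk r k" using subsetD[OF blk_child1[OF \<open>k \<ge> 1\<close>]] subsetD[OF blk_child2[OF \<open>k \<ge> 1\<close>]] q(1) j(1) r by auto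
  then have "k'' = k" using winner_pos_unique[of r k'' q k] k'' q j assms by auto
  then show False using k'' assms(7) by simp
qed

end



context
  fixes n :: nat and cls :: "clause list" and occ :: "nat \<Rightarrow> nat \<Rightarrow> nat"
    and seat :: "nat \<Rightarrow> player" and N :: nat
  assumes max23: "max23_instance n cls occ"
    and inj: "inj_on seat {1..2^N}"
    and img: "seat ` {1..2^N} \<subseteq> players n (length cls)"
begin

abbreviation "Aw r k \<equiv> winner (rank n (length cls)) seat (r-1) (2*k-1)"
abbreviation "Bw r k \<equiv> winner (rank n (length cls)) seat (r-1) (2*k)"
abbreviation "lp c p \<equiv> (if snd (lit cls c p) then VarT (fst (lit cls c p)) else VarF (fst (lit cls c p)))"
abbreviation "Ir r k \<equiv> r \<in> {1..N} \<and> k \<in> {1..2^(N-r)}"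

definition CG :: "nat \<Rightarrow> nat \<Rightarrow> nat \<Rightarrow> nat \<Rightarrow> bool" where
  "CG r k c p \<longleftrightarrow> c < length cls \<and> p < 2 \<and> r = occ c p \<and>
     ((Aw r k = Cl c \<and> Bw r k = lp c p) \<or> (Bw r k = Cl c \<and> Aw r k = lp c p))"

definition VG :: "nat \<Rightarrow> nat \<Rightarrow> nat \<Rightarrow> bool" where
  "VG r k x \<longleftrightarrow> r = 1 \<and> ((Aw r k = Var x \<and> (Bw r k = VarT x \<or> Bw r k = VarF x)) \<or>
      (Bw r k = Var x \<and> (Aw r k = VarT x \<or> Aw r k = VarF x)))"

lemma gv_eq:
  "game_value cls occ (Aw r k) (Bw r k) r = (if (\<exists>x. VG r k x) \<or> (\<exists>c p. CG r k c p) then 1 else 0)"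
  unfolding game_value_def value_edge_def VG_def CG_def
  apply (rule if_cong)
  by blast+

lemma lit_var_lt: "c < length cls \<Longrightarrow> p < 2 \<Longrightarrow> fst (lit cls c p) < n"
  using max23 unfolding max23_instance_def by blast

lemma in_players:
  assumes "Ir r k" shows "Aw r k \<in> players n (length cls)" "Bw r k \<in> players n (length cls)"
proof -
  obtain s where r: "r = Suc s" using assms by (cases r) auto
  have sN: "Suc s \<le> N" using assms r by auto
  have k: "k \<in> {1..2^(N - Suc s)}" using assms r by auto
  note cr = child_range[OF sN k]
  obtain q1 where q1: "q1 \<in> blk s (2*k-1)" "winner (rank n (length cls)) seat s (2*k-1) = seat q1"
    using winner_in[of s N "2*k-1"] cr sN by auto
  obtain q2 where q2: "q2 \<in> blk s (2*k)" "winner (rank n (length cls)) seat s (2*k) = seat q2"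
    using winner_in[of s N "2*k"] cr sN by auto
  have "q1 \<in> {1..2^N}" using blk_sub[of s N "2*k-1"] q1 cr sN by auto
  moreover have "q2 \<in> {1..2^N}" using blk_sub[of s N "2*k"] q2 cr sN by auto
  ultimately show "Aw r k \<in> players n (length cls)" "Bw r k \<in> players n (length cls)"
    using img q1 q2 r by auto
qed

lemma Var_players: "Var x \<in> players n m \<Longrightarrow> x < n"
  unfolding players_def by auto

lemma winner_Suc: "r \<ge> 1 \<Longrightarrow> winner (rank n (length cls)) seat r k =
   stronger_of (rank n (length cls)) (Aw r k) (Bw r k)"
  by (cases r) auto

lemma CG_loser:
  assumes "CG r k c p" "r \<ge> 1"
  shows "winner (rank n (length cls)) seat r k \<noteq> Cl c"
proof -
  have c: "c < length cls" "p < 2" using assms unfolding CG_def by auto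
  have lt: "rank n (length cls) (lp c p) < rank n (length cls) (Cl c)"
    using lit_var_lt[OF c] by auto
  have w: "winner (rank n (length cls)) seat r k = stronger_of (rank n (length cls)) (Aw r k) (Bw r k)"
    by (rule winner_Suc[OF assms(2)])
  have ne: "lp c p \<noteq> Cl c" by simp
  from assms(1) consider "Aw r k = Cl c \<and> Bw r k = lp c p" | "Bw r k = Cl c \<and> Aw r k = lp c p"
    unfolding CG_def by blast
  then show ?thesis
  proof cases
    case 1
    then have "winner (rank n (length cls)) seat r k = lp c p"
      unfolding w stronger_of_def using lt by simp
    then show ?thesis using ne by simp
  next
    case 2
    then have "winner (rank n (length cls)) seat r k = lp c p"
      unfolding w stronger_of_def using lt by simp
    then show ?thesis using ne by simp
  qed
qed

lemma VG_winner:
  assumes "VG 1 k x"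
  shows "winner (rank n (length cls)) seat 1 k = Var x"
proof -
  have w: "winner (rank n (length cls)) seat 1 k = stronger_of (rank n (length cls)) (Aw 1 k) (Bw 1 k)"
    by (rule winner_Suc) simp
  from assms consider "Aw 1 k = Var x" "Bw 1 k = VarT x \<or> Bw 1 k = VarF x"
    | "Bw 1 k = Var x" "Aw 1 k = VarT x \<or> Aw 1 k = VarF x"
    unfolding VG_def by blast
  then show ?thesis
  proof cases
    case 1
    have "rank n (length cls) (Aw 1 k) < rank n (length cls) (Bw 1 k)"
      using 1 by (elim disjE) simp_all
    then show ?thesis unfolding w stronger_of_def using 1(1) by simp
  next
    case 2
    have "\<not> rank n (length cls) (Aw 1 k) < rank n (length cls) (Bw 1 k)"
      using 2 by (elim disjE) simp_all
    then show ?thesis unfolding w stronger_of_def using 2(1) by simp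
  qed
qed

lemma VG_loserT:
  assumes "VG 1 k x" "VarT x \<in> {Aw 1 k, Bw 1 k}"
  shows "winner (rank n (length cls)) seat 1 k \<noteq> VarT x"
  using VG_winner[OF assms(1)] by simp

lemma VG_loserF:
  assumes "VG 1 k x" "VarF x \<in> {Aw 1 k, Bw 1 k}"
  shows "winner (rank n (length cls)) seat 1 k \<noteq> VarF x"
  using VG_winner[OF assms(1)] by simp

lemma CG_same:
  assumes "CG r k c p" "CG r k c' p'"
  shows "c = c' \<and> lit cls c p = lit cls c' p'"
  using assms unfolding CG_def by (auto split: if_splits simp: prod_eq_iff)

lemma CG_mem: "CG r k c p \<Longrightarrow> Cl c \<in> {Aw r k, Bw r k} \<and> lp c p \<in> {Aw r k, Bw r k}"
  unfolding CG_def by auto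

lemma CG_VG: "CG r k c p \<Longrightarrow> VG r k x \<Longrightarrow> False"
  unfolding CG_def VG_def by (auto split: if_splits)

lemma occ_inj:
  assumes "CG r k c p" "CG r k' c' p'" "fst (lit cls c p) = x" "fst (lit cls c' p') = x"
  shows "c = c' \<and> p = p'"
proof -
  have "x < n" using assms lit_var_lt unfolding CG_def by auto
  then have b: "inj_on (\<lambda>(i, p). occ i p) (occurrences cls x)"
    using max23 unfolding max23_instance_def bij_betw_def by blast
  have "(c,p) \<in> occurrences cls x" "(c',p') \<in> occurrences cls x"
    using assms unfolding CG_def occurrences_def by auto
  moreover have "occ c p = occ c' p'" using assms unfolding CG_def by auto
  ultimately show ?thesis using b unfolding inj_on_def by auto
qed


lemma fa: "1 \<le> r \<Longrightarrow> r \<le> N \<Longrightarrow> k \<in> {1..2^(N-r)} \<Longrightarrow> k' \<in> {1..2^(N-r)} \<Longrightarrow>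
    P \<in> {Aw r k, Bw r k} \<Longrightarrow> P \<in> {Aw r k', Bw r k'} \<Longrightarrow> k = k'"
  by (rule fact_a[OF inj, where rk="rank n (length cls)"])

lemma fb: "1 \<le> r \<Longrightarrow> r < r' \<Longrightarrow> r' \<le> N \<Longrightarrow> k \<in> {1..2^(N-r)} \<Longrightarrow> k' \<in> {1..2^(N-r')} \<Longrightarrow>
    P \<in> {Aw r k, Bw r k} \<Longrightarrow> P \<noteq> winner (rank n (length cls)) seat r k \<Longrightarrow>
    P \<in> {Aw r' k', Bw r' k'} \<Longrightarrow> False"
  by (rule fact_b[OF inj, where rk="rank n (length cls)"])

abbreviation "Iset \<equiv> Sigma {1..N} (\<lambda>r. {1..(2::nat)^(N-r)})"

lemma fin_I: "finite Iset" by auto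

definition "Vs x = {z\<in>Iset. VG (fst z) (snd z) x}"
definition "Ts x = {z\<in>Iset. \<exists>c p. CG (fst z) (snd z) c p \<and> lit cls c p = (x,True)}"
definition "Fs x = {z\<in>Iset. \<exists>c p. CG (fst z) (snd z) c p \<and> lit cls c p = (x,False)}"
definition "Ks c = {z\<in>Iset. \<exists>p. CG (fst z) (snd z) c p}"

lemma TsD: "z \<in> Ts x \<Longrightarrow> z \<in> Iset \<and> (\<exists>c p. CG (fst z) (snd z) c p \<and> lit cls c p = (x,True))"
  unfolding Ts_def by (rule CollectD)
lemma FsD: "z \<in> Fs x \<Longrightarrow> z \<in> Iset \<and> (\<exists>c p. CG (fst z) (snd z) c p \<and> lit cls c p = (x,False))"
  unfolding Fs_def by (rule CollectD)

lemma fins: "finite (Vs x)" "finite (Ts x)" "finite (Fs x)" "finite (Ks c)"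
  unfolding Vs_def Ts_def Fs_def Ks_def by auto

lemma card_V: "card (Vs x) \<le> 1"
proof -
  have "\<forall>a\<in>Vs x. \<forall>b\<in>Vs x. a = b"
  proof (intro ballI)
    fix a b assume a: "a \<in> Vs x" and b: "b \<in> Vs x"
    obtain r k where ab: "a = (r,k)" by (cases a)
    obtain r' k' where bb: "b = (r',k')" by (cases b)
    have h: "Ir r k" "Ir r' k'" "VG r k x" "VG r' k' x" using a b ab bb unfolding Vs_def by auto
    then have r1: "r = 1" "r' = 1" unfolding VG_def by auto
    have m1: "Var x \<in> {Aw 1 k, Bw 1 k}" "Var x \<in> {Aw 1 k', Bw 1 k'}"
      using h r1 unfolding VG_def by auto
    have "k = k'" using fa[of 1 k k' "Var x"] m1 h r1 by auto
    then show "a = b" using ab bb r1 by simp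
  qed
  then show ?thesis using card_le_Suc0_iff_eq[OF fins(1)] by simp
qed

lemma card_K: "card (Ks c) \<le> 1"
proof -
  have "\<forall>a\<in>Ks c. \<forall>b\<in>Ks c. a = b"
  proof (intro ballI)
    fix a b assume a: "a \<in> Ks c" and b: "b \<in> Ks c"
    obtain r k where ab: "a = (r,k)" by (cases a)
    obtain r' k' where bb: "b = (r',k')" by (cases b)
    obtain p p' where h: "Ir r k" "Ir r' k'" "CG r k c p" "CG r' k' c p'"
      using a b ab bb unfolding Ks_def by auto
    have m: "Cl c \<in> {Aw r k, Bw r k}" "Cl c \<in> {Aw r' k', Bw r' k'}" using CG_mem h by auto
    have l: "winner (rank n (length cls)) seat r k \<noteq> Cl c"
      "winner (rank n (length cls)) seat r' k' \<noteq> Cl c"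
      using CG_loser h by auto
    consider "r < r'" | "r = r'" | "r' < r" by linarith
    then show "a = b"
    proof cases
      case 1
      then show ?thesis using fb[of r r' k k' "Cl c"] m l h by auto
    next
      case 2
      then have "k = k'" using fa[of r k k' "Cl c"] m h by auto
      then show ?thesis using 2 ab bb by simp
    next
      case 3
      then show ?thesis using fb[of r' r k' k "Cl c"] m l h by auto
    qed
  qed
  then show ?thesis using card_le_Suc0_iff_eq[OF fins(4)] by simp
qed

lemma card_TF: assumes "x < n" shows "card (Ts x) + card (Fs x) \<le> 3"
proof -
  have TF: "\<And>z. z \<in> Ts x \<union> Fs x \<Longrightarrow> \<exists>c p b. Ir (fst z) (snd z) \<and> CG (fst z) (snd z) c p \<and> lit cls c p = (x,b)"
    unfolding Ts_def Fs_def by auto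
  have disj: "Ts x \<inter> Fs x = {}"
  proof (rule ccontr)
    assume "Ts x \<inter> Fs x \<noteq> {}"
    then obtain r k c p c' p' where "CG r k c p" "lit cls c p = (x,True)" "CG r k c' p'" "lit cls c' p' = (x,False)"
      unfolding Ts_def Fs_def by auto
    then show False using occ_inj[of r k c p k c' p' x] by auto
  qed
  have inj1: "inj_on fst (Ts x \<union> Fs x)"
  proof (rule inj_onI)
    fix a b assume a: "a \<in> Ts x \<union> Fs x" and b: "b \<in> Ts x \<union> Fs x" and e: "fst a = fst b"
    obtain r k where ab: "a = (r,k)" by (cases a)
    obtain r' k' where bb: "b = (r',k')" by (cases b)
    obtain c p bo where h: "Ir r k" "CG r k c p" "lit cls c p = (x,bo)" using TF[OF a] ab by auto
    obtain c' p' bo' where h': "Ir r' k'" "CG r' k' c' p'" "lit cls c' p' = (x,bo')" using TF[OF b] bb by auto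
    have rr: "r' = r" using e ab bb by simp
    have cp: "c = c' \<and> p = p'" using occ_inj[of r k c p k' c' p' x] h h' rr by auto
    have "lp c p \<in> {Aw r k, Bw r k}" using CG_mem[OF h(2)] by blast
    moreover have "lp c' p' \<in> {Aw r' k', Bw r' k'}" using CG_mem[OF h'(2)] by blast
    ultimately have "lp c p \<in> {Aw r k, Bw r k}" "lp c p \<in> {Aw r k', Bw r k'}"
      using cp rr by auto
    then have "k = k'" using fa[of r k k' "lp c p"] h h' rr by auto
    then show "a = b" using ab bb rr by simp
  qed
  have bij: "bij_betw (\<lambda>(i, p). occ i p) (occurrences cls x) {1..card (occurrences cls x)}"
    and c3: "card (occurrences cls x) \<le> 3"
    using max23 assms unfolding max23_instance_def by auto
  have img1: "fst ` (Ts x \<union> Fs x) \<subseteq> {1..card (occurrences cls x)}"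
  proof
    fix r assume "r \<in> fst ` (Ts x \<union> Fs x)"
    then obtain z where z: "z \<in> Ts x \<union> Fs x" "r = fst z" by auto
    obtain c p bo where h: "CG r (snd z) c p" "lit cls c p = (x,bo)" using TF[OF z(1)] z by auto
    have "(c,p) \<in> occurrences cls x" using h unfolding CG_def occurrences_def by auto
    moreover have "r = occ c p" using h unfolding CG_def by auto
    ultimately show "r \<in> {1..card (occurrences cls x)}"
      using bij_betw_imp_surj_on[OF bij] by force
  qed
  have "card (Ts x) + card (Fs x) = card (Ts x \<union> Fs x)"
    using card_Un_disjoint[OF fins(2) fins(3) disj] by simp
  also have "\<dots> = card (fst ` (Ts x \<union> Fs x))" using card_image[OF inj1] by simp
  also have "\<dots> \<le> card {1..card (occurrences cls x)}" using card_mono[OF _ img1] by simp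
  finally show ?thesis using c3 by simp
qed

lemma VTF: assumes "Vs x \<noteq> {}" shows "Ts x = {} \<or> Fs x = {}"
proof -
  obtain r k where h: "Ir r k" "VG r k x" using assms unfolding Vs_def by auto
  have r1: "r = 1" using h unfolding VG_def by auto
  have gen: False if L: "L \<in> {Aw 1 k, Bw 1 k}" "winner (rank n (length cls)) seat 1 k \<noteq> L"
     and z: "Ir r' k'" "CG r' k' c p" "lp c p = L" for L r' k' c p
  proof -
    have m: "L \<in> {Aw r' k', Bw r' k'}" using CG_mem z by auto
    consider "r' = 1" | "1 < r'" using z by force
    then show False
    proof cases
      case 1
      then have "k' = k" using fa[of 1 k' k L] L m z h r1 by auto
      then show False using CG_VG[of 1 k c p x] z h r1 1 by auto
    next
      case 2
      then show False using fb[of 1 r' k k' L] L m z h r1 by auto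
    qed
  qed
  have "VarT x \<in> {Aw 1 k, Bw 1 k} \<or> VarF x \<in> {Aw 1 k, Bw 1 k}" using h r1 unfolding VG_def by auto
  then show ?thesis
  proof
    assume T: "VarT x \<in> {Aw 1 k, Bw 1 k}"
    have "Ts x = {}"
    proof (rule ccontr)
      assume "Ts x \<noteq> {}"
      then obtain r' k' c p where o: "Ir r' k'" "CG r' k' c p" "lit cls c p = (x,True)"
        unfolding Ts_def by auto
      have "lp c p = VarT x" using o(3) by simp
      then show False using gen[OF T VG_loserT[OF h(2)[unfolded r1] T] o(1) o(2)] by blast
    qed
    then show ?thesis by simp
  next
    assume F: "VarF x \<in> {Aw 1 k, Bw 1 k}"
    have "Fs x = {}"
    proof (rule ccontr)
      assume "Fs x \<noteq> {}"
      then obtain r' k' c p where o: "Ir r' k'" "CG r' k' c p" "lit cls c p = (x,False)"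
        unfolding Fs_def by auto
      have "lp c p = VarF x" using o(3) by simp
      then show False using gen[OF F VG_loserF[OF h(2)[unfolded r1] F] o(1) o(2)] by blast
    qed
    then show ?thesis by simp
  qed
qed


lemma main_count:
  "card {z\<in>Iset. (\<exists>x. VG (fst z) (snd z) x) \<or> (\<exists>c p. CG (fst z) (snd z) c p)}
     \<le> n + num_satisfied cls (\<lambda>x. card (Fs x) \<le> card (Ts x))"
  (is "card ?G \<le> _ + num_satisfied cls ?a")
proof -
  define Sx where "Sx x = (if ?a x then Ts x else Fs x)" for x
  define Sat where "Sat = {i. i < length cls \<and> (lit_true ?a (fst (cls ! i)) \<or> lit_true ?a (snd (cls ! i)))}"
  have SxD: "z \<in> Iset \<and> (\<exists>c p. CG (fst z) (snd z) c p \<and> lit cls c p = (x, ?a x))" if "z \<in> Sx x" for z x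
  proof (cases "?a x")
    case True
    then have "z \<in> Ts x" using that unfolding Sx_def by simp
    then have h: "z \<in> Iset \<and> (\<exists>c p. CG (fst z) (snd z) c p \<and> lit cls c p = (x, True))"
      by (rule TsD)
    have e: "?a x = True" using True by simp
    show ?thesis unfolding e by (rule h)
  next
    case False
    then have "z \<in> Fs x" using that unfolding Sx_def by simp
    then have h: "z \<in> Iset \<and> (\<exists>c p. CG (fst z) (snd z) c p \<and> lit cls c p = (x, False))"
      by (rule FsD)
    have e: "?a x = False" using False by simp
    show ?thesis unfolding e by (rule h)
  qed
  have fS: "finite (Sx x)" for x unfolding Sx_def using fins(2,3) by (simp only: if_split) blast
  have G_sub: "?G \<subseteq> (\<Union>x\<in>{..<n}. Vs x \<union> Ts x \<union> Fs x)"
  proof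
    fix z assume z: "z \<in> ?G"
    obtain r k where zz: "z = (r,k)" by (cases z)
    have I: "Ir r k" using z zz by auto
    from z zz have "(\<exists>x. VG r k x) \<or> (\<exists>c p. CG r k c p)" by auto
    then show "z \<in> (\<Union>x\<in>{..<n}. Vs x \<union> Ts x \<union> Fs x)"
    proof
      assume "\<exists>x. VG r k x"
      then obtain x where v: "VG r k x" by auto
      then have "Var x \<in> {Aw r k, Bw r k}" unfolding VG_def by auto
      then have "Var x \<in> players n (length cls)" using in_players[OF I] by auto
      then have "x < n" by (rule Var_players)
      then show ?thesis using v I zz unfolding Vs_def by auto
    next
      assume "\<exists>c p. CG r k c p"
      then obtain c p where cg: "CG r k c p" by auto
      define y where "y = fst (lit cls c p)"
      have y: "y < n" using cg lit_var_lt unfolding CG_def y_def by auto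
      have "lit cls c p = (y, True) \<or> lit cls c p = (y, False)" unfolding y_def
        by (cases "lit cls c p") auto
      then have "z \<in> Ts y \<union> Fs y" using cg I zz unfolding Ts_def Fs_def by auto
      then show ?thesis using y by auto
    qed
  qed
  have per: "card (Vs x \<union> Ts x \<union> Fs x) \<le> 1 + card (Sx x)" if x: "x < n" for x
  proof -
    have "card (Vs x \<union> Ts x \<union> Fs x) \<le> card (Vs x \<union> Ts x) + card (Fs x)"
      by (rule card_Un_le)
    moreover have "card (Vs x \<union> Ts x) \<le> card (Vs x) + card (Ts x)" by (rule card_Un_le)
    ultimately have "card (Vs x \<union> Ts x \<union> Fs x) \<le> card (Vs x) + card (Ts x) + card (Fs x)"
      by linarith
    moreover have "card (Vs x) + card (Ts x) + card (Fs x) \<le> 1 + card (Sx x)"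
    proof (cases "Vs x = {}")
      case True
      then show ?thesis using card_TF[OF x] unfolding Sx_def by auto
    next
      case False
      then have "Ts x = {} \<or> Fs x = {}" using VTF by auto
      then show ?thesis using card_V[of x] unfolding Sx_def by auto
    qed
    ultimately show ?thesis by linarith
  qed
  have disj: "\<forall>i\<in>{..<n}. \<forall>j\<in>{..<n}. i \<noteq> j \<longrightarrow> Sx i \<inter> Sx j = {}"
  proof (intro ballI impI)
    fix i j :: nat assume "i \<in> {..<n}" "j \<in> {..<n}" and ij: "i \<noteq> j"
    have A: "\<exists>c p. CG (fst z) (snd z) c p \<and> fst (lit cls c p) = x" if zs: "z \<in> Sx x" for z x
    proof -
      obtain c p where "CG (fst z) (snd z) c p" "lit cls c p = (x, ?a x)" using SxD[OF zs] by blast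
      then show ?thesis by (intro exI[of _ c] exI[of _ p]) simp
    qed
    show "Sx i \<inter> Sx j = {}"
    proof (rule ccontr)
      assume "Sx i \<inter> Sx j \<noteq> {}"
      then obtain z where "z \<in> Sx i" "z \<in> Sx j" by auto
      then obtain c p c' p' where h: "CG (fst z) (snd z) c p" "fst (lit cls c p) = i"
        "CG (fst z) (snd z) c' p'" "fst (lit cls c' p') = j" using A by meson
      have "lit cls c p = lit cls c' p'" using CG_same[OF h(1) h(3)] by (elim conjE)
      then show False using h(2,4) ij by simp
    qed
  qed
  have US: "(\<Union>x\<in>{..<n}. Sx x) \<subseteq> (\<Union>c\<in>Sat. Ks c)"
  proof
    fix z assume "z \<in> (\<Union>x\<in>{..<n}. Sx x)"
    then obtain x where "z \<in> Sx x" by blast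
    then obtain c p where h: "z \<in> Iset" "CG (fst z) (snd z) c p" "lit cls c p = (x, ?a x)"
      using SxD by blast
    have c: "c < length cls" "p < 2" using h unfolding CG_def by auto
    have "lit_true ?a (lit cls c p)" using h unfolding lit_true_def by simp
    then have "c \<in> Sat" using c unfolding Sat_def lit_def by (auto split: if_splits)
    then show "z \<in> (\<Union>c\<in>Sat. Ks c)" using h unfolding Ks_def by auto
  qed
  have fSat: "finite Sat" unfolding Sat_def by (rule finite_subset[of _ "{..<length cls}"]) auto
  have fU: "finite (\<Union>x\<in>{..<n}. Vs x \<union> Ts x \<union> Fs x)"
    by (intro finite_UN_I finite_lessThan finite_UnI fins)
  have X1: "card ?G \<le> card (\<Union>x\<in>{..<n}. Vs x \<union> Ts x \<union> Fs x)"
    by (rule card_mono[OF fU G_sub])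
  have X2: "card (\<Union>x\<in>{..<n}. Vs x \<union> Ts x \<union> Fs x) \<le> (\<Sum>x<n. card (Vs x \<union> Ts x \<union> Fs x))"
    by (rule card_UN_le) (rule finite_lessThan)
  have X3: "(\<Sum>x<n. card (Vs x \<union> Ts x \<union> Fs x)) \<le> (\<Sum>x<n. 1 + card (Sx x))"
    by (rule sum_mono) (rule per, simp)
  have X4: "(\<Sum>x<n. 1 + card (Sx x)) = n + (\<Sum>x<n. card (Sx x))"
    by (simp only: sum.distrib sum_constant card_lessThan) simp
  have Y1: "(\<Sum>x<n. card (Sx x)) = card (\<Union>x\<in>{..<n}. Sx x)"
    by (rule card_UN_disjoint[symmetric]) (use disj fS in auto)
  have fK: "finite (\<Union>c\<in>Sat. Ks c)" by (intro finite_UN_I fSat fins)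
  have Y2: "card (\<Union>x\<in>{..<n}. Sx x) \<le> card (\<Union>c\<in>Sat. Ks c)"
    by (rule card_mono[OF fK US])
  have Y3: "card (\<Union>c\<in>Sat. Ks c) \<le> (\<Sum>c\<in>Sat. card (Ks c))" by (rule card_UN_le[OF fSat])
  have Y4: "(\<Sum>c\<in>Sat. card (Ks c)) \<le> (\<Sum>c\<in>Sat. 1)" by (rule sum_mono) (rule card_K)
  have Y5: "(\<Sum>c\<in>Sat. (1::nat)) = num_satisfied cls ?a" unfolding num_satisfied_def Sat_def by simp
  show ?thesis using X1 X2 X3 X4 Y1 Y2 Y3 Y4 Y5 by linarith
qed

lemma sum_count:
  "(\<Sum>r\<in>{1..N}. \<Sum>k\<in>{1..2^(N-r)}. game_value cls occ (Aw r k) (Bw r k) r)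
    = card {z\<in>Iset. (\<exists>x. VG (fst z) (snd z) x) \<or> (\<exists>c p. CG (fst z) (snd z) c p)}"
proof -
  have "(\<Sum>r\<in>{1..N}. \<Sum>k\<in>{1..2^(N-r)}. game_value cls occ (Aw r k) (Bw r k) r)
     = (\<Sum>(r,k)\<in>Iset. game_value cls occ (Aw r k) (Bw r k) r)"
    by (rule sum.Sigma) auto
  also have "\<dots> = (\<Sum>z\<in>Iset. if (\<exists>x. VG (fst z) (snd z) x) \<or> (\<exists>c p. CG (fst z) (snd z) c p) then 1 else 0)"
  proof (rule sum.cong[OF refl])
    fix z assume "z \<in> Iset"
    obtain r k where zz: "z = (r,k)" by (cases z)
    show "(case z of (r,k) \<Rightarrow> game_value cls occ (Aw r k) (Bw r k) r) =
      (if (\<exists>x. VG (fst z) (snd z) x) \<or> (\<exists>c p. CG (fst z) (snd z) c p) then 1 else 0)"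
      unfolding zz prod.case fst_conv snd_conv by (rule gv_eq)
  qed
  also have "\<dots> = (\<Sum>z\<in>{z\<in>Iset. (\<exists>x. VG (fst z) (snd z) x) \<or> (\<exists>c p. CG (fst z) (snd z) c p)}. 1)"
    by (rule sum.inter_filter[OF fin_I, symmetric])
  also have "\<dots> = card {z\<in>Iset. (\<exists>x. VG (fst z) (snd z) x) \<or> (\<exists>c p. CG (fst z) (snd z) c p)}"
    by (rule card_eq_sum[symmetric])
  finally show ?thesis .
qed

lemma tv_bound:
  "\<exists>a. (\<Sum>r\<in>{1..N}. \<Sum>k\<in>{1..2^(N-r)}. game_value cls occ (Aw r k) (Bw r k) r) \<le> n + num_satisfied cls a"
  unfolding sum_count by (rule exI, rule main_count)

end

theorem lemma2:
  fixes n :: nat and cls :: "clause list" and occ :: "nat \<Rightarrow> nat \<Rightarrow> nat"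
    and \<sigma> :: "player \<Rightarrow> nat" and k' :: int
  assumes "max23_instance n cls occ"
    and "bij_betw \<sigma> (players n (length cls)) {1..2 ^ rounds n}"
    and "int (tournament_value n cls occ \<sigma>) \<ge> k'"
  shows "\<exists>a :: nat \<Rightarrow> bool. int (num_satisfied cls a) \<ge> k' - int n"
proof -
  define seat where "seat = inv_into (players n (length cls)) \<sigma>"
  have b: "bij_betw seat {1..2 ^ rounds n} (players n (length cls))"
    unfolding seat_def by (rule bij_betw_inv_into[OF assms(2)])
  have inj: "inj_on seat {1..2 ^ rounds n}" using b by (rule bij_betw_imp_inj_on)
  have img: "seat ` {1..2 ^ rounds n} \<subseteq> players n (length cls)" using b bij_betw_imp_surj_on by blast
  have tv: "tournament_value n cls occ \<sigma> =
    (\<Sum>r\<in>{1..rounds n}. \<Sum>k\<in>{1..2^(rounds n-r)}. game_value cls occ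
        (winner (rank n (length cls)) seat (r-1) (2*k-1)) (winner (rank n (length cls)) seat (r-1) (2*k)) r)"
    unfolding tournament_value_def Let_def seat_def by (rule refl)
  obtain a where h: "(\<Sum>r\<in>{1..rounds n}. \<Sum>k\<in>{1..2^(rounds n-r)}. game_value cls occ
        (winner (rank n (length cls)) seat (r-1) (2*k-1)) (winner (rank n (length cls)) seat (r-1) (2*k)) r)
      \<le> n + num_satisfied cls a"
    using tv_bound[OF assms(1) inj img] by blast
  have "tournament_value n cls occ \<sigma> \<le> n + num_satisfied cls a"
    unfolding tv by (rule h)
  then have "int (tournament_value n cls occ \<sigma>) \<le> int n + int (num_satisfied cls a)" by linarith
  then show ?thesis using assms(3) by (intro exI[of _ a]) linarith
qed

end
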